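(* Let $r\in\mathbb{N}$ and $\eta(r)=11(r+1)^2(2r+3)\binom{2r}{r-1}$. Let $G$ be an $rP_3$-free graph and let $A,B$ be two disjoint stable sets in $G$ such that every vertex in $B$ has at least two neighbours in $A$. Then there exists $S\subseteq A$ with $|S|\leq\eta(r)$ such that every vertex in $B$ has a neighbour in $S$.
   Context: Graphs are finite and simple. $rP_3$ is the disjoint union of $r$ paths on $3$ vertices; a graph is $H$-free if it has no induced subgraph isomorphic to $H$. A stable set is a set of pairwise nonadjacent vertices. *)

theory Defs
  imports Main
begin

definition simple_graph :: "'a set \<Rightarrow> ('a \<Rightarrow> 'a \<Rightarrow> bool) \<Rightarrow> bool" where
  "simple_graph V E \<longleftrightarrow> finite V \<and> (\<forall>x y. E x y \<longrightarrow> x \<in> V \<and> y \<in> V) \<and>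
     (\<forall>x y. E x y \<longrightarrow> E y x) \<and> (\<forall>x. \<not> E x x)"

definition P3_edge :: "nat \<Rightarrow> nat \<Rightarrow> bool" where
  "P3_edge j k \<longleftrightarrow> {j, k} = {0, 1} \<or> {j, k} = {1, 2}"

definition has_induced_rP3 :: "'a set \<Rightarrow> ('a \<Rightarrow> 'a \<Rightarrow> bool) \<Rightarrow> nat \<Rightarrow> bool" where
  "has_induced_rP3 V E r \<longleftrightarrow> (\<exists>f :: nat \<times> nat \<Rightarrow> 'a.
      inj_on f ({0..<r} \<times> {0,1,2}) \<and> f ` ({0..<r} \<times> {0,1,2}) \<subseteq> V \<and>
      (\<forall>p\<in>{0..<r} \<times> {0,1,2}. \<forall>q\<in>{0..<r} \<times> {0,1,2}.
          E (f p) (f q) \<longleftrightarrow> (fst p = fst q \<and> P3_edge (snd p) (snd q))))"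

definition rP3_free :: "'a set \<Rightarrow> ('a \<Rightarrow> 'a \<Rightarrow> bool) \<Rightarrow> nat \<Rightarrow> bool" where
  "rP3_free V E r \<longleftrightarrow> \<not> has_induced_rP3 V E r"

definition stable_set :: "'a set \<Rightarrow> ('a \<Rightarrow> 'a \<Rightarrow> bool) \<Rightarrow> 'a set \<Rightarrow> bool" where
  "stable_set V E S \<longleftrightarrow> S \<subseteq> V \<and> (\<forall>x\<in>S. \<forall>y\<in>S. \<not> E x y)"

definition eta :: "nat \<Rightarrow> nat" where
  "eta r = 11 * (r + 1)^2 * (2 * r + 3) * ((2 * r) choose (r - 1))"

end

theory Submission
  imports Defs
begin

definition struct :: "('a \<Rightarrow> 'a \<Rightarrow> bool) \<Rightarrow> 'a set \<Rightarrow> 'a set \<Rightarrow> nat \<Rightarrow> bool" where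
  "struct E A B k \<longleftrightarrow> (\<exists>bs ps qs. \<forall>i<k. bs i \<in> B \<and> ps i \<in> A \<and> qs i \<in> A \<and> ps i \<noteq> qs i \<and>
     E (ps i) (bs i) \<and> E (qs i) (bs i) \<and>
     (\<forall>j<k. j \<noteq> i \<longrightarrow> \<not> E (ps j) (bs i) \<and> \<not> E (qs j) (bs i)))"

lemma two_elems:
  assumes "card X \<ge> 2" shows "\<exists>a a'. a \<in> X \<and> a' \<in> X \<and> a \<noteq> a'"
proof -
  have "finite X" "X \<noteq> {}" using assms card.infinite by fastforce+
  then obtain a where a: "a \<in> X" by auto
  have "card (X - {a}) \<ge> 1" using assms a \<open>finite X\<close> by (simp add: card_Diff_singleton)
  then obtain a' where "a' \<in> X - {a}" by (metis card.empty ex_in_conv not_one_le_zero)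
  then show ?thesis using a by auto
qed

lemma key:
  assumes "finite A" "\<forall>b\<in>B. card {a\<in>A. E a b} \<ge> 2"
  shows "struct E A B (Suc k) \<or> (\<exists>S\<subseteq>A. card S \<le> 2*k \<and> (\<forall>b\<in>B. \<exists>s\<in>S. E s b))"
  using assms
proof (induction k arbitrary: A B)
  case (0 A B)
  show ?case
  proof (cases "B = {}")
    case True then show ?thesis by auto
  next
    case False
    then obtain b0 where b0: "b0 \<in> B" by auto
    have "card {a\<in>A. E a b0} \<ge> 2" using 0 b0 by auto
    then obtain a a' where aa: "a \<in> A" "a' \<in> A" "a \<noteq> a'" "E a b0" "E a' b0"
      using two_elems[of "{x\<in>A. E x b0}"] by auto
    have "struct E A B (Suc 0)"
      unfolding struct_def
      by (rule exI[of _ "\<lambda>_. b0"], rule exI[of _ "\<lambda>_. a"], rule exI[of _ "\<lambda>_. a'"])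
         (use aa b0 in auto)
    then show ?thesis by auto
  qed
next
  case (Suc k A B)
  show ?case
  proof (cases "B = {}")
    case True then show ?thesis by auto
  next
    case False
    define N where "N b = {x\<in>A. E x b}" for b
    obtain b0 where b0: "b0 \<in> B" "\<forall>b\<in>B. card (N b0) \<le> card (N b)"
      using ex_has_least_nat[of "\<lambda>b. b \<in> B" _ "\<lambda>b. card (N b)"] False by blast
    have c0: "card (N b0) \<ge> 2" using Suc.prems b0 N_def by auto
    then obtain a a' where aa: "a \<in> A" "a' \<in> A" "a \<noteq> a'" "E a b0" "E a' b0"
      unfolding N_def
      using two_elems[of "{x\<in>A. E x b0}"] by auto
    define A' where "A' = A - N b0"
    define B' where "B' = {b\<in>B. \<not> E a b \<and> \<not> E a' b}"
    have finN: "finite (N b)" for b using Suc.prems(1) N_def by auto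
    have deg: "\<forall>b\<in>B'. card {x\<in>A'. E x b} \<ge> 2"
    proof
      fix b assume b: "b \<in> B'"
      have eq: "{x\<in>A'. E x b} = N b - N b0" unfolding A'_def N_def by auto
      have "N b \<inter> N b0 \<subseteq> N b0 - {a, a'}" using b B'_def N_def by auto
      then have "card (N b \<inter> N b0) \<le> card (N b0 - {a,a'})"
        by (meson card_mono finN finite_Diff)
      also have "\<dots> = card (N b0) - 2" using aa N_def finN by (simp add: card_Diff_subset)
      finally have i: "card (N b \<inter> N b0) \<le> card (N b0) - 2" .
      have "card (N b - N b0) = card (N b) - card (N b \<inter> N b0)"
        using finN card_Diff_subset_Int by (metis finite_Int)
      moreover have "card (N b0) \<le> card (N b)" using b b0 B'_def by auto
      ultimately show "card {x\<in>A'. E x b} \<ge> 2" unfolding eq using i c0 by linarith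
    qed
    have finA': "finite A'" using Suc.prems(1) A'_def by auto
    from Suc.IH[OF finA' deg] show ?thesis
    proof
      assume "struct E A' B' (Suc k)"
      then obtain bs ps qs where H: "\<forall>i<Suc k. bs i \<in> B' \<and> ps i \<in> A' \<and> qs i \<in> A' \<and> ps i \<noteq> qs i \<and>
     E (ps i) (bs i) \<and> E (qs i) (bs i) \<and>
     (\<forall>j<Suc k. j \<noteq> i \<longrightarrow> \<not> E (ps j) (bs i) \<and> \<not> E (qs j) (bs i))"
        unfolding struct_def by blast
      have "struct E A B (Suc (Suc k))"
        unfolding struct_def
      proof (rule exI[of _ "bs(Suc k := b0)"], rule exI[of _ "ps(Suc k := a)"],
          rule exI[of _ "qs(Suc k := a')"], intro allI impI)
        fix i assume i: "i < Suc (Suc k)"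
        show "(bs(Suc k := b0)) i \<in> B \<and> (ps(Suc k := a)) i \<in> A \<and> (qs(Suc k := a')) i \<in> A \<and>
          (ps(Suc k := a)) i \<noteq> (qs(Suc k := a')) i \<and>
          E ((ps(Suc k := a)) i) ((bs(Suc k := b0)) i) \<and> E ((qs(Suc k := a')) i) ((bs(Suc k := b0)) i) \<and>
          (\<forall>j<Suc (Suc k). j \<noteq> i \<longrightarrow> \<not> E ((ps(Suc k := a)) j) ((bs(Suc k := b0)) i) \<and>
              \<not> E ((qs(Suc k := a')) j) ((bs(Suc k := b0)) i))"
        proof (cases "i = Suc k")
          case True
          then show ?thesis using aa b0 H unfolding A'_def N_def
            by (auto simp: less_Suc_eq)
        next
          case False
          then have "i < Suc k" using i by auto
          then show ?thesis using aa b0 H False unfolding A'_def B'_def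
            by (auto simp: less_Suc_eq)
        qed
      qed
      then show ?thesis by auto
    next
      assume "\<exists>S\<subseteq>A'. card S \<le> 2*k \<and> (\<forall>b\<in>B'. \<exists>s\<in>S. E s b)"
      then obtain S where S: "S \<subseteq> A'" "card S \<le> 2*k" "\<forall>b\<in>B'. \<exists>s\<in>S. E s b" by blast
      have "card (insert a (insert a' S)) \<le> card S + 2"
      proof -
        have ci: "card (insert x T) \<le> Suc (card T)" for x and T :: "'a set"
          by (cases "finite T") (auto simp: card_insert_if)
        show ?thesis using ci[of a "insert a' S"] ci[of a' S] by linarith
      qed
      moreover have "insert a (insert a' S) \<subseteq> A" using S aa A'_def by auto
      moreover have "\<forall>b\<in>B. \<exists>s\<in>insert a (insert a' S). E s b" using S B'_def by auto
      ultimately show ?thesis using S by (intro disjI2 exI[of _ "insert a (insert a' S)"]) auto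
    qed
  qed
qed

theorem lemma2p5:
  fixes V :: "'a set" and E :: "'a \<Rightarrow> 'a \<Rightarrow> bool" and r :: nat and A B :: "'a set"
  assumes "simple_graph V E"
    and "rP3_free V E r"
    and "stable_set V E A" and "stable_set V E B" and "A \<inter> B = {}"
    and "\<forall>b\<in>B. card {a\<in>A. E a b} \<ge> 2"
  shows "\<exists>S\<subseteq>A. card S \<le> eta r \<and> (\<forall>b\<in>B. \<exists>s\<in>S. E s b)"
proof -
  have VE: "finite V" "\<forall>x y. E x y \<longrightarrow> E y x" "\<forall>x. \<not> E x x"
    using assms(1) unfolding simple_graph_def by auto
  have AV: "A \<subseteq> V" and Ast: "\<forall>x\<in>A. \<forall>y\<in>A. \<not> E x y" using assms(3) unfolding stable_set_def by auto
  have BV: "B \<subseteq> V" and Bst: "\<forall>x\<in>B. \<forall>y\<in>B. \<not> E x y" using assms(4) unfolding stable_set_def by auto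
  have finA: "finite A" using AV VE(1) finite_subset by blast
  obtain k where r: "r = Suc k"
  proof (cases r)
    case 0
    have "has_induced_rP3 V E r" unfolding has_induced_rP3_def 0 by auto
    then show ?thesis using assms(2) unfolding rP3_free_def by auto
  qed
  from key[OF finA assms(6), of k] show ?thesis
  proof
    assume "struct E A B (Suc k)"
    then obtain bs ps qs where H: "\<forall>i<Suc k. bs i \<in> B \<and> ps i \<in> A \<and> qs i \<in> A \<and> ps i \<noteq> qs i \<and>
     E (ps i) (bs i) \<and> E (qs i) (bs i) \<and>
     (\<forall>j<Suc k. j \<noteq> i \<longrightarrow> \<not> E (ps j) (bs i) \<and> \<not> E (qs j) (bs i))"
      unfolding struct_def by blast
    define f where "f (p::nat\<times>nat) = (if snd p = 0 then ps (fst p) else if snd p = 1 then bs (fst p) else qs (fst p))" for p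
    define D where "D = {0..<r} \<times> {0::nat,1,2}"
    have fD: "\<And>i x. (i,x) \<in> D \<Longrightarrow> i < Suc k \<and> (x = 0 \<or> x = 1 \<or> x = 2)" unfolding D_def r by auto
    have AB: "\<And>x. x \<in> A \<Longrightarrow> x \<notin> B" using assms(5) by auto
    have sym: "\<And>u v. E u v \<longleftrightarrow> E v u" using VE by blast
    have nA: "\<And>u v. u \<in> A \<Longrightarrow> v \<in> A \<Longrightarrow> \<not> E u v" using Ast by blast
    have nB: "\<And>u v. u \<in> B \<Longrightarrow> v \<in> B \<Longrightarrow> \<not> E u v" using Bst by blast
    have F: "E (ps i) (bs j) \<longleftrightarrow> i = j" "E (bs i) (ps j) \<longleftrightarrow> i = j"
        "E (qs i) (bs j) \<longleftrightarrow> i = j" "E (bs i) (qs j) \<longleftrightarrow> i = j"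
        "\<not> E (ps i) (ps j)" "\<not> E (ps i) (qs j)" "\<not> E (qs i) (ps j)" "\<not> E (qs i) (qs j)"
        "\<not> E (bs i) (bs j)" "ps i \<noteq> bs j" "qs i \<noteq> bs j" "ps i = qs j \<longleftrightarrow> False"
        "bs j \<noteq> ps i" "bs j \<noteq> qs i" "qs j = ps i \<longleftrightarrow> False"
        "ps i = ps j \<longleftrightarrow> i = j" "qs i = qs j \<longleftrightarrow> i = j" "bs i = bs j \<longleftrightarrow> i = j"
      if ij: "i < Suc k" "j < Suc k" for i j
    proof -
      have Hi: "bs i \<in> B \<and> ps i \<in> A \<and> qs i \<in> A \<and> ps i \<noteq> qs i \<and> E (ps i) (bs i) \<and> E (qs i) (bs i)"
        and Hj: "bs j \<in> B \<and> ps j \<in> A \<and> qs j \<in> A \<and> ps j \<noteq> qs j \<and> E (ps j) (bs j) \<and> E (qs j) (bs j)"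
        using H ij by auto
      have Hij: "i \<noteq> j \<Longrightarrow> \<not> E (ps j) (bs i) \<and> \<not> E (qs j) (bs i) \<and> \<not> E (ps i) (bs j) \<and> \<not> E (qs i) (bs j)"
        using H ij by auto
      have s1: "E (bs i) (ps j) = E (ps j) (bs i)" "E (bs i) (qs j) = E (qs j) (bs i)" using sym by blast+
      have Hi': "bs j \<in> B \<and> ps i \<in> A \<and> qs i \<in> A \<and> bs i \<in> B \<and> ps j \<in> A \<and> qs j \<in> A" using Hi Hj by blast
      show "E (ps i) (bs j) \<longleftrightarrow> i = j" "E (bs i) (ps j) \<longleftrightarrow> i = j"
        "E (qs i) (bs j) \<longleftrightarrow> i = j" "E (bs i) (qs j) \<longleftrightarrow> i = j"
        unfolding s1 using Hi Hij by (cases "i = j"; simp)+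
      show "\<not> E (ps i) (ps j)" "\<not> E (ps i) (qs j)" "\<not> E (qs i) (ps j)" "\<not> E (qs i) (qs j)"
        "\<not> E (bs i) (bs j)" using Hi' nA nB by blast+
      show "ps i \<noteq> bs j" "qs i \<noteq> bs j" "bs j \<noteq> ps i" "bs j \<noteq> qs i" using AB[of "ps i"] AB[of "qs i"] Hi' by auto
      show "ps i = qs j \<longleftrightarrow> False" "qs j = ps i \<longleftrightarrow> False"
        using Hi Hj Hij by (cases "i = j"; auto)+
      show "ps i = ps j \<longleftrightarrow> i = j" "qs i = qs j \<longleftrightarrow> i = j"
        using Hi Hj Hij by (cases "i = j"; auto)+
      show "bs i = bs j \<longleftrightarrow> i = j" using Hi Hj Hij by (cases "i = j"; auto)
    qed
    have inj: "inj_on f D"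
    proof (rule inj_onI)
      fix p q assume p: "p \<in> D" and q: "q \<in> D" and e: "f p = f q"
      obtain i x where pp: "p = (i,x)" by (cases p)
      obtain j y where qq: "q = (j,y)" by (cases q)
      have pi: "i < Suc k" "x = 0 \<or> x = 1 \<or> x = 2" using fD p pp by auto
      have qj: "j < Suc k" "y = 0 \<or> y = 1 \<or> y = 2" using fD q qq by auto
      note FF = F[OF pi(1) qj(1)] F[OF qj(1) pi(1)]
      show "p = q" using e unfolding pp qq using pi(2) qj(2)
        by (elim disjE; simp add: f_def FF)
    qed
    have img: "f ` D \<subseteq> V"
      using H AV BV unfolding f_def D_def r by auto
    have adj: "\<forall>p\<in>D. \<forall>q\<in>D. E (f p) (f q) \<longleftrightarrow> (fst p = fst q \<and> P3_edge (snd p) (snd q))"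
    proof (intro ballI)
      fix p q assume p: "p \<in> D" and q: "q \<in> D"
      obtain i x where pp: "p = (i,x)" by (cases p)
      obtain j y where qq: "q = (j,y)" by (cases q)
      have pi: "i < Suc k" "x = 0 \<or> x = 1 \<or> x = 2" using fD p pp by auto
      have qj: "j < Suc k" "y = 0 \<or> y = 1 \<or> y = 2" using fD q qq by auto
      have P: "P3_edge x y \<longleftrightarrow> (x = 0 \<and> y = 1) \<or> (x = 1 \<and> y = 0) \<or> (x = 1 \<and> y = 2) \<or> (x = 2 \<and> y = 1)"
        using pi qj unfolding P3_edge_def by (auto simp: doubleton_eq_iff)
      note FF = F[OF pi(1) qj(1)]
      show "E (f p) (f q) \<longleftrightarrow> (fst p = fst q \<and> P3_edge (snd p) (snd q))"
        unfolding pp qq fst_conv snd_conv P using pi(2) qj(2)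
        by (elim disjE; simp add: f_def FF)
    qed
    have "has_induced_rP3 V E r"
      unfolding has_induced_rP3_def D_def[symmetric] using inj img adj by (intro exI[of _ f] conjI)
    then show ?thesis using assms(2) unfolding rP3_free_def by auto
  next
    assume "\<exists>S\<subseteq>A. card S \<le> 2*k \<and> (\<forall>b\<in>B. \<exists>s\<in>S. E s b)"
    then obtain S where S: "S \<subseteq> A" "card S \<le> 2*k" "\<forall>b\<in>B. \<exists>s\<in>S. E s b" by blast
    have c: "(2*r) choose (r-1) \<ge> 1" by (simp add: Suc_leI r)
    have "(1::nat) \<le> 11*(r+1)^2" by simp
    then have "1*(2*r+3) \<le> 11*(r+1)^2*(2*r+3)" by (rule mult_le_mono1)
    moreover have "2*k \<le> 1*(2*r+3)" using r by simp
    ultimately have "2*k \<le> 11 * (r + 1)^2 * (2 * r + 3)" by (rule le_trans[rotated])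
    also have "\<dots> \<le> 11 * (r + 1)^2 * (2 * r + 3) * ((2*r) choose (r-1))"
      using c by (metis mult_le_mono2 nat_mult_1_right)
    finally have "2*k \<le> eta r" unfolding eta_def .
    then show ?thesis using S by auto
  qed
qed

end
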